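(* Let $(V,\cdot)$ be a nondegenerate intersection pairing of odd type that is not positive definite. Then there exists $v\in V$ such that $v\cdot v<0$ and $v\cdot v$ is odd.
   Context: An intersection pairing is a finitely generated free abelian group $V$ with a symmetric bilinear form $V\times V\to\mathbf{Z}$, $(u,w)\mapsto u\cdot w$; nondegenerate means the adjoint $V\to\mathrm{Hom}(V,\mathbf{Z})$ has nonzero determinant. It has odd type if $w\cdot w$ is odd for some $w\in V$. Positive definite means $u\cdot u>0$ for all $u\neq 0$. *)

theory Defs
  imports "HOL-Analysis.Analysis"
begin

text \<open>An intersection pairing: a finitely generated free abelian group V, modelled as
  \<open>int ^ 'n\<close> for a finite index type 'n (a chosen basis), with a symmetric
  Z-bilinear form \<open>b\<close>.\<close>

definition intersection_pairing :: "(int ^ 'n \<Rightarrow> int ^ 'n \<Rightarrow> int) \<Rightarrow> bool" where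
  "intersection_pairing b \<longleftrightarrow>
     (\<forall>u v w. b (u + v) w = b u w + b v w) \<and>
     (\<forall>c u w. b (c *s u) w = c * b u w) \<and>
     (\<forall>u w. b u w = b w u)"

text \<open>Matrix of the adjoint V \<rightarrow> Hom(V,Z) with respect to the standard basis and its dual.\<close>
definition gram_matrix :: "(int ^ 'n \<Rightarrow> int ^ 'n \<Rightarrow> int) \<Rightarrow> int ^ 'n ^ 'n" where
  "gram_matrix b = (\<chi> i j. b (axis i 1) (axis j 1))"

definition nondegenerate_pairing :: "(int ^ 'n \<Rightarrow> int ^ 'n \<Rightarrow> int) \<Rightarrow> bool" where
  "nondegenerate_pairing b \<longleftrightarrow> det (gram_matrix b) \<noteq> 0"

definition odd_type :: "(int ^ 'n \<Rightarrow> int ^ 'n \<Rightarrow> int) \<Rightarrow> bool" where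
  "odd_type b \<longleftrightarrow> (\<exists>w. odd (b w w))"

definition positive_definite_pairing :: "(int ^ 'n \<Rightarrow> int ^ 'n \<Rightarrow> int) \<Rightarrow> bool" where
  "positive_definite_pairing b \<longleftrightarrow> (\<forall>u. u \<noteq> 0 \<longrightarrow> b u u > 0)"

end

theory Submission
  imports Defs
begin

lemma ip_sum_left:
  assumes "intersection_pairing b"
  shows "b (sum f S) w = (\<Sum>i\<in>S. b (f i) w)"
proof (induction S rule: infinite_finite_induct)
  case (infinite A)
  have "b (0 + 0) w = b 0 w + b 0 w" using assms unfolding intersection_pairing_def by blast
  then show ?case using infinite by simp
next
  case empty
  have "b (0 + 0) w = b 0 w + b 0 w" using assms unfolding intersection_pairing_def by blast
  then show ?case by simp
next
  case (insert x F)
  have "b (f x + sum f F) w = b (f x) w + b (sum f F) w"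
    using assms unfolding intersection_pairing_def by blast
  then show ?case using insert by simp
qed

lemma ip_expand:
  assumes "intersection_pairing b"
  shows "b u w = (\<Sum>i\<in>UNIV. u$i * b (axis i 1) w)"
proof -
  have "b u w = b (\<Sum>i\<in>UNIV. (u$i) *s axis i 1) w" by (simp add: basis_expansion)
  also have "\<dots> = (\<Sum>i\<in>UNIV. b ((u$i) *s axis i 1) w)" by (rule ip_sum_left[OF assms])
  also have "\<dots> = (\<Sum>i\<in>UNIV. u$i * b (axis i 1) w)"
  proof -
    have "\<And>i. b ((u$i) *s axis i 1) w = u$i * b (axis i 1) w"
      using assms unfolding intersection_pairing_def by blast
    then show ?thesis by simp
  qed
  finally show ?thesis .
qed

lemma nondeg_witness:
  fixes b :: "int ^ 'n \<Rightarrow> int ^ 'n \<Rightarrow> int"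
  assumes ip: "intersection_pairing b" and nd: "nondegenerate_pairing b" and u: "u \<noteq> 0"
  shows "\<exists>x. b u x \<noteq> 0"
proof (rule ccontr)
  assume "\<not> (\<exists>x. b u x \<noteq> 0)"
  hence z: "\<And>x. b u x = 0" by blast
  define G where "G = gram_matrix b"
  define R :: "real^'n^'n" where "R = (\<chi> i j. of_int (G$i$j))"
  define ur :: "real^'n" where "ur = (\<chi> i. of_int (u$i))"
  have "det R = of_int (det G)"
    unfolding R_def det_def by (simp add: of_int_sum of_int_prod)
  hence "det R \<noteq> 0" using nd unfolding nondegenerate_pairing_def G_def by simp
  then obtain R' where R': "R ** R' = mat 1"
    using invertible_det_nz[of R] unfolding invertible_def by blast
  have "ur v* R = 0"
  proof -
    { fix j
    have "(ur v* R)$j = of_int (\<Sum>i\<in>UNIV. u$i * G$i$j)"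
      unfolding vector_matrix_mult_def R_def ur_def by (simp add: of_int_sum)
    also have "(\<Sum>i\<in>UNIV. u$i * G$i$j) = b u (axis j 1)"
      unfolding G_def gram_matrix_def using ip_expand[OF ip, of u "axis j 1"] by simp
    finally have "(ur v* R)$j = 0$j" using z by simp }
    then show ?thesis by (simp add: vec_eq_iff)
  qed
  hence "ur = 0"
    by (metis R' vector_matrix_mul_assoc vector_matrix_mul_rid vector_matrix_mult_0)
  hence "u = 0" unfolding ur_def by (simp add: vec_eq_iff)
  with u show False by simp
qed

theorem mainTheorem5:
  fixes b :: "int ^ 'n \<Rightarrow> int ^ 'n \<Rightarrow> int"
  assumes "intersection_pairing b"
    and "nondegenerate_pairing b"
    and "odd_type b"
    and "\<not> positive_definite_pairing b"
  shows "\<exists>v. b v v < 0 \<and> odd (b v v)"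
proof -
  have ip: "intersection_pairing b" by fact
  have add1: "\<And>u v w. b (u + v) w = b u w + b v w"
    and sc1: "\<And>c u w. b (c *s u) w = c * b u w"
    and sym: "\<And>u w. b u w = b w u" using ip unfolding intersection_pairing_def by blast+
  have add2: "\<And>u v w. b w (u + v) = b w u + b w v" using add1 sym by metis
  have sc2: "\<And>c u w. b w (c *s u) = c * b w u" using sc1 sym by metis
  have expand: "\<And>w u k. b (w + k *s u) (w + k *s u) = b w w + 2 * k * b w u + k * k * b u u"
  proof -
    fix w u k
    have "b u w = b w u" by (rule sym)
    then show "b (w + k *s u) (w + k *s u) = b w w + 2 * k * b w u + k * k * b u u"
      by (simp add: add1 add2 sc1 sc2 algebra_simps)
  qed
  obtain w where w: "odd (b w w)" using assms(3) unfolding odd_type_def by blast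
  obtain u where u0: "u \<noteq> 0" and uu: "b u u \<le> 0"
    using assms(4) unfolding positive_definite_pairing_def by force
  show ?thesis
  proof (cases "b u u = 0")
    case True
    obtain x where x: "b u x \<noteq> 0" using nondeg_witness[OF ip assms(2) u0] by blast
    obtain w' where w': "odd (b w' w')" "b w' u \<noteq> 0"
    proof (cases "b w u = 0")
      case False then show ?thesis using that w by blast
    next
      case True
      have "b (w + 2 *s x) (w + 2 *s x) = b w w + 2 * 2 * b w x + 2 * 2 * b x x"
        using expand by simp
      hence "odd (b (w + 2 *s x) (w + 2 *s x))" using w by simp
      moreover have "b (w + 2 *s x) u = 2 * b u x" using True sym[of w u] sym[of x u] by (simp add: add1 sc1)
      ultimately show ?thesis using that x by simp
    qed
    define a where "a = b w' u"
    define N where "N = \<bar>b w' w'\<bar> + 1"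
    define k where "k = - a * N"
    have e: "b (w' + k *s u) (w' + k *s u) = b w' w' - 2 * N * (a * a)"
      using expand[of w' k u] True unfolding k_def a_def by (simp add: algebra_simps)
    have a1: "\<bar>a\<bar> \<ge> 1" using w'(2) unfolding a_def by simp
    have "\<bar>a\<bar> * \<bar>a\<bar> \<ge> 1 * 1" using a1 by (intro mult_mono) auto
    hence "a * a \<ge> 1" by (simp add: abs_mult_self_eq)
    moreover have "2 * N \<ge> 0" using N_def by simp
    ultimately have "2 * N * (a * a) \<ge> 2 * N * 1" by (intro mult_left_mono)
    hence "2 * N * (a * a) \<ge> 2 * N" by simp
    hence "b (w' + k *s u) (w' + k *s u) < 0" using e N_def by linarith
    moreover have "odd (b (w' + k *s u) (w' + k *s u))" using e w'(1) by simp
    ultimately show ?thesis by blast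
  next
    case False
    hence neg: "b u u \<le> -1" using uu by simp
    show ?thesis
    proof (cases "odd (b u u)")
      case True then show ?thesis using neg by force
    next
      case False
      define N where "N = \<bar>b w w\<bar> + 2 * \<bar>b w u\<bar> + 1"
      have e: "b (w + N *s u) (w + N *s u) = b w w + 2 * N * b w u + N * N * b u u"
        using expand by simp
      have N0: "N \<ge> 1" unfolding N_def by simp
      have "N * N * b u u \<le> - (N * N)" using neg N0
        by (metis mult_minus_right mult_right_mono_neg mult.right_neutral zero_le_mult_iff
            order_trans linorder_linear zero_le_one mult_left_mono)
      moreover have "2 * N * b w u \<le> 2 * N * \<bar>b w u\<bar>" using N0 by (simp add: mult_left_mono)
      moreover have "N * N \<ge> N * (\<bar>b w w\<bar> + 2 * \<bar>b w u\<bar> + 1)" using N_def by simp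
      moreover have "N * (\<bar>b w w\<bar> + 2 * \<bar>b w u\<bar> + 1) = N * \<bar>b w w\<bar> + 2 * N * \<bar>b w u\<bar> + N"
        by (simp add: algebra_simps)
      moreover have "N * \<bar>b w w\<bar> \<ge> \<bar>b w w\<bar>" using N0 by (simp add: mult_right_mono[of 1 N, simplified])
      moreover have "b w w \<le> \<bar>b w w\<bar>" by simp
      ultimately have "b (w + N *s u) (w + N *s u) < 0" using e N0 by linarith
      moreover have "odd (b (w + N *s u) (w + N *s u))" using e w False by simp
      ultimately show ?thesis by blast
    qed
  qed
qed

end
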